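(* Let $f,g:\mathcal{O}\to\mathcal{F}$ be scaling maps with scaling ratios $q^{\lambda_f}$ and $q^{\lambda_g}$, where $\lambda_f>\lambda_g\ge0$, and let $\tilde f(x)=[f(x)]$, $\tilde g(x)=[g(x)]$. Let $D\subset\mathcal{O}$ be a disk of radius $q^{-\gamma}$ with $0\le\gamma\le\lambda_f-\lambda_g$. Then $$\mu\big(\tilde f^{-1}(D)\cap\tilde g^{-1}(D)\big)=\mathbb{E}\big(1_D\circ\tilde f\cdot 1_D\circ\tilde g\big)=\mu(D)^2,$$ where $\mathbb{E}$ is expectation with respect to the normalized Haar measure $\mu$ on $\mathcal{O}$.
   Context: $\mathcal{F}$ is a non-Archimedean local field with valuation ring $\mathcal{O}$, maximal ideal $\mathfrak{p}$, $q=\#\mathcal{O}/\mathfrak{p}$, normalized absolute value $|\cdot|_\mathfrak{p}$, prime element $\pi$. Fix representatives $C\subset\mathcal{O}$ of $\mathcal{O}/\mathfrak{p}$ with $0\in C$; writing $x=\sum_{n\ge v}c_n\pi^n$ ($c_n\in C$), $[x]=\sum_{n\ge0}c_n\pi^n$. A disk of radius $q^{k}$ is $\{x:|x-a|_\mathfrak{p}\le q^k\}$. A map $f:\Omega\to\mathcal{F}$ is scaling with ratio $q^\lambda$ if $|f(x)-f(y)|_\mathfrak{p}=q^\lambda|x-y|_\mathfrak{p}$ for all $x,y$. $\mu$ is Haar measure with $\mu(\mathcal{O})=1$; $1_D$ is the indicator of $D$. *)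

theory Defs
  imports "HOL-Analysis.Analysis"
begin

text \<open>The normalized absolute value is nabs, the residue
  field has q elements, pi is a prime element, C is the fixed set of representatives
  of O/p (with 0 in C).\<close>

definition valring :: "('a::field \<Rightarrow> real) \<Rightarrow> 'a set" where
  "valring nabs = {x. nabs x \<le> 1}"

definition disk :: "('a::field \<Rightarrow> real) \<Rightarrow> nat \<Rightarrow> 'a \<Rightarrow> int \<Rightarrow> 'a set" where
  "disk nabs q a k = {x. nabs (x - a) \<le> real q powi k}"

definition nonarch_local_field ::
  "('a::field \<Rightarrow> real) \<Rightarrow> nat \<Rightarrow> 'a \<Rightarrow> 'a set \<Rightarrow> bool" where
  "nonarch_local_field nabs q \<pi> C \<longleftrightarrow>
     (\<forall>x. nabs x \<ge> 0) \<and> (\<forall>x. nabs x = 0 \<longleftrightarrow> x = 0) \<and>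
     (\<forall>x y. nabs (x * y) = nabs x * nabs y) \<and>
     (\<forall>x y. nabs (x + y) \<le> max (nabs x) (nabs y)) \<and>
     (\<forall>x. x \<noteq> 0 \<longrightarrow> (\<exists>k::int. nabs x = real q powi k)) \<and>
     nabs \<pi> = 1 / real q \<and>
     finite C \<and> card C = q \<and> 0 \<in> C \<and> C \<subseteq> valring nabs \<and>
     (\<forall>x\<in>valring nabs. \<exists>!c\<in>C. nabs (x - c) < 1) \<and>
     (\<forall>s::nat \<Rightarrow> 'a. (\<forall>e>0. \<exists>N. \<forall>m\<ge>N. \<forall>n\<ge>N. nabs (s m - s n) < e) \<longrightarrow>
        (\<exists>l. \<forall>e>0. \<exists>N. \<forall>n\<ge>N. nabs (s n - l) < e))"

text \<open>Normalized Haar measure: translation invariant measure on the sigma-algebra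
  generated by the disks (= Borel sets), with mu(O) = 1.\<close>

definition haar_normalized ::
  "('a::field \<Rightarrow> real) \<Rightarrow> nat \<Rightarrow> 'a measure \<Rightarrow> bool" where
  "haar_normalized nabs q M \<longleftrightarrow>
     space M = UNIV \<and>
     sets M = sigma_sets UNIV {disk nabs q a k | a k. True} \<and>
     (\<forall>A\<in>sets M. \<forall>a. emeasure M ((\<lambda>x. a + x) ` A) = emeasure M A) \<and>
     emeasure M (valring nabs) = 1"

definition expands ::
  "('a::field \<Rightarrow> real) \<Rightarrow> 'a set \<Rightarrow> 'a \<Rightarrow> (int \<Rightarrow> 'a) \<Rightarrow> int \<Rightarrow> 'a \<Rightarrow> bool" where
  "expands nabs C \<pi> c v x \<longleftrightarrow>
     (\<forall>n. c n \<in> C) \<and> (\<forall>n<v. c n = 0) \<and>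
     (\<forall>e>0. \<exists>N0. \<forall>N\<ge>N0. nabs (x - (\<Sum>n\<in>{v..N}. c n * \<pi> powi n)) < e)"

text \<open>[x] = sum_{n>=0} c_n pi^n.\<close>

definition bracket :: "('a::field \<Rightarrow> real) \<Rightarrow> 'a set \<Rightarrow> 'a \<Rightarrow> 'a \<Rightarrow> 'a" where
  "bracket nabs C \<pi> x =
     (THE y. \<exists>c v. expands nabs C \<pi> c v x \<and>
                  expands nabs C \<pi> (\<lambda>n. if n \<ge> 0 then c n else 0) 0 y)"

definition scaling :: "('a::field \<Rightarrow> real) \<Rightarrow> nat \<Rightarrow> 'a set \<Rightarrow> ('a \<Rightarrow> 'a) \<Rightarrow> int \<Rightarrow> bool" where
  "scaling nabs q \<Omega> f lam \<longleftrightarrow>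
     (\<forall>x\<in>\<Omega>. \<forall>y\<in>\<Omega>. nabs (f x - f y) = real q powi lam * nabs (x - y))"

end

theory Submission
  imports Defs
begin


locale nalf =
  fixes nabs :: "'a::field \<Rightarrow> real" and q :: nat and p :: 'a and C :: "'a set"
  assumes F: "nonarch_local_field nabs q p C"
begin

abbreviation "Q \<equiv> real q"
abbreviation "Ov \<equiv> valring nabs"

lemma nn: "nabs x \<ge> 0" using F unfolding nonarch_local_field_def by (elim conjE) simp
lemma zero_iff[simp]: "nabs x = 0 \<longleftrightarrow> x = 0" using F unfolding nonarch_local_field_def by (elim conjE) simp
lemma mult: "nabs (x * y) = nabs x * nabs y" using F unfolding nonarch_local_field_def by (elim conjE) simp
lemma ultra: "nabs (x + y) \<le> max (nabs x) (nabs y)" using F unfolding nonarch_local_field_def by (elim conjE) simp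
lemma valgrp: "x \<noteq> 0 \<Longrightarrow> \<exists>k::int. nabs x = Q powi k" using F unfolding nonarch_local_field_def by (elim conjE) simp
lemma nabs_p: "nabs p = 1 / Q" using F unfolding nonarch_local_field_def by (elim conjE) simp
lemma Cfin: "finite C" and Ccard: "card C = q" and C0: "0 \<in> C" and CO: "C \<subseteq> Ov"
  using F unfolding nonarch_local_field_def by (elim conjE; simp)+
lemma Cuniq: "x \<in> Ov \<Longrightarrow> \<exists>!c\<in>C. nabs (x - c) < 1" using F unfolding nonarch_local_field_def by (elim conjE) simp

lemma inO: "x \<in> Ov \<longleftrightarrow> nabs x \<le> 1" by (simp add: valring_def)

lemma nabs1[simp]: "nabs 1 = 1"
proof -
  have "nabs 1 = nabs 1 * nabs 1" using mult[of 1 1] by simp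
  moreover have "nabs 1 \<noteq> 0" by simp
  ultimately show ?thesis by (metis mult_cancel_left1)
qed

lemma nabs0[simp]: "nabs 0 = 0" by simp

lemma nabs_inv: "nabs (inverse x) = inverse (nabs x)"
proof (cases "x = 0")
  case False
  have "nabs x * nabs (inverse x) = 1" using mult[of x "inverse x"] False by simp
  thus ?thesis by (metis inverse_unique)
qed simp

lemma nabs_div: "nabs (x / y) = nabs x / nabs y"
  by (simp add: divide_inverse mult nabs_inv)

lemma nabs_pow: "nabs (x ^ n) = nabs x ^ n"
  by (induction n) (simp_all add: mult)

lemma nabs_neg1: "nabs (-1) = 1"
proof -
  have e: "nabs (-1) * nabs (-1) = 1" using mult[of "-1" "-1"] by simp
  have "(y - 1) * (y + 1) = y * y - 1" for y :: real by (simp add: algebra_simps)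
  from this[of "nabs (-1)"] e have "(nabs (-1) - 1) * (nabs (-1) + 1) = 0" by simp
  moreover have "nabs (-1) + 1 > 0" using nn[of "-1"] by linarith
  ultimately show ?thesis by simp
qed

lemma nabs_neg[simp]: "nabs (- x) = nabs x"
  using mult[of "-1" x] nabs_neg1 by simp

lemma nabs_sym: "nabs (x - y) = nabs (y - x)"
  by (metis minus_diff_eq nabs_neg)

lemma ultra_diff: "nabs (x - y) \<le> max (nabs x) (nabs y)"
  using ultra[of x "-y"] by simp

lemma ultra_trans: "nabs (x - y) \<le> r \<Longrightarrow> nabs (y - z) \<le> r \<Longrightarrow> nabs (x - z) \<le> r"
  using ultra[of "x - y" "y - z"] by simp

lemma ultra_strict: assumes "nabs y < nabs x" shows "nabs (x + y) = nabs x"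
proof -
  have "nabs (x + y) \<le> nabs x" using ultra[of x y] assms by simp
  moreover have "nabs x \<le> max (nabs (x + y)) (nabs y)" using ultra[of "x + y" "-y"] by simp
  ultimately show ?thesis using assms by linarith
qed

lemma q_ge2: "q \<ge> 2"
proof (rule ccontr)
  assume "\<not> q \<ge> 2"
  moreover have "q \<noteq> 0" using Ccard Cfin C0 card_gt_0_iff by fastforce
  ultimately have "q = 1" by simp
  hence "C = {0}" using Ccard C0 Cfin by (metis card_1_singletonE singletonD)
  moreover have "(1::'a) \<in> Ov" by (simp add: inO)
  ultimately show False using Cuniq[of 1] by auto
qed

lemma Qgt1: "Q > 1" using q_ge2 by simp
lemma Qpos: "Q > 0" using q_ge2 by simp

lemma p_nz: "p \<noteq> 0"
proof
  assume "p = 0" hence "1 / Q = 0" using nabs_p by simp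
  thus False using Qpos by simp
qed

lemma nabs_ppow: "nabs (p ^ n) = inverse (Q ^ n)"
  by (simp add: nabs_pow nabs_p power_one_over inverse_eq_divide)

lemma nabs_powi: "nabs (x powi n) = nabs x powi n"
  by (simp add: power_int_def nabs_pow nabs_inv power_inverse)

lemma nabs_ppowi: "nabs (p powi n) = Q powi (- n)"
  by (simp add: nabs_powi nabs_p power_int_minus power_int_inverse[symmetric] divide_inverse)

lemma discrete: assumes "nabs x < 1" shows "nabs x \<le> 1 / Q"
proof (cases "x = 0")
  case False
  then obtain k where k: "nabs x = Q powi k" using valgrp by blast
  have "k < 0"
  proof (rule ccontr)
    assume "\<not> k < 0"
    hence "Q powi k \<ge> 1" using Qgt1 by (simp add: one_le_power_int)
    thus False using k assms by simp
  qed
  hence "Q powi k \<le> Q powi (-1)" using Qgt1 by (intro power_int_increasing) auto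
  thus ?thesis using k by (simp add: power_int_minus divide_inverse)
qed (simp add: Qpos)

lemma C_sep: "c \<in> C \<Longrightarrow> c' \<in> C \<Longrightarrow> nabs (c - c') < 1 \<Longrightarrow> c = c'"
proof -
  assume a: "c \<in> C" "c' \<in> C" "nabs (c - c') < 1"
  hence "c \<in> Ov" using CO by blast
  from Cuniq[OF this] obtain c0 where "\<And>d. d \<in> C \<Longrightarrow> nabs (c - d) < 1 \<Longrightarrow> d = c0" by blast
  from this[of c] this[of c'] a show "c = c'" by simp
qed

lemma C_diff: "c \<in> C \<Longrightarrow> c' \<in> C \<Longrightarrow> c \<noteq> c' \<Longrightarrow> nabs (c - c') = 1"
proof -
  assume a: "c \<in> C" "c' \<in> C" "c \<noteq> c'"
  hence "nabs c \<le> 1" "nabs c' \<le> 1" using CO by (auto simp: inO)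
  hence "nabs (c - c') \<le> 1" using ultra_diff[of c c'] by simp
  moreover have "\<not> nabs (c - c') < 1" using C_sep a by blast
  ultimately show "nabs (c - c') = 1" by simp
qed

end

context nalf begin

definition rad :: "nat \<Rightarrow> real" where "rad m = inverse (Q ^ m)"
definition cs :: "'a \<Rightarrow> nat \<Rightarrow> 'a set" where "cs y m = {x. nabs (x - y) \<le> rad m}"

lemma rad_pos: "rad m > 0" using Qpos by (simp add: rad_def)
lemma rad_add: "rad (m + n) = rad m * rad n" by (simp add: rad_def power_add)
lemma rad_0[simp]: "rad 0 = 1" by (simp add: rad_def)
lemma rad_Suc: "rad (Suc m) = rad m / Q" by (simp add: rad_def field_simps)
lemma rad_mono: "m \<le> n \<Longrightarrow> rad n \<le> rad m"
  using Qgt1 by (simp add: rad_def le_imp_inverse_le power_increasing)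
lemma rad_le1: "rad m \<le> 1" using rad_mono[of 0 m] by simp
lemma nabs_ppow_rad: "nabs (p ^ n) = rad n" by (simp add: nabs_ppow rad_def)
lemma rad_Q: "Q ^ m * rad m = 1" using Qpos by (simp add: rad_def)

lemma disk_cs: "disk nabs q y (- int m) = cs y m"
  by (simp add: disk_def cs_def rad_def power_int_minus)
lemma O_cs: "Ov = cs 0 0" by (simp add: cs_def valring_def)

lemma sum_le: "finite A \<Longrightarrow> (\<And>i. i \<in> A \<Longrightarrow> nabs (F i) \<le> B) \<Longrightarrow> B \<ge> 0 \<Longrightarrow> nabs (sum F A) \<le> B"
proof (induction A rule: finite_induct)
  case (insert x A)
  hence "nabs (F x) \<le> B" "nabs (sum F A) \<le> B" by auto
  thus ?case using ultra[of "F x" "sum F A"] insert.hyps by simp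
qed simp

primrec R :: "nat \<Rightarrow> 'a set" where
  "R 0 = {0}" | "R (Suc m) = (\<lambda>(c,r). c + p * r) ` (C \<times> R m)"

lemma p_small: "nabs (p * x) \<le> 1 / Q * nabs x" by (simp add: mult nabs_p)

lemma invQ_lt1: "1 / Q < 1" using Qgt1 by simp

lemma pmul_le: assumes "nabs x \<le> 1" shows "nabs (p * x) \<le> 1 / Q"
proof -
  have "1 / Q * nabs x \<le> 1 / Q * 1" using assms Qpos by (intro mult_left_mono) auto
  thus ?thesis using p_small[of x] by simp
qed

lemma R_O: "R m \<subseteq> Ov"
proof (induction m)
  case (Suc m)
  { fix c r assume "c \<in> C" "r \<in> R m"
    hence "nabs c \<le> 1" "nabs r \<le> 1" using Suc CO by (auto simp: inO)
    moreover have "nabs (p * r) \<le> 1 / Q * nabs r" by (rule p_small)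
    moreover have "1 / Q * nabs r \<le> 1" using \<open>nabs r \<le> 1\<close> Qgt1 nn[of r]
      by (simp add: mult_le_one)
    ultimately have "nabs (c + p * r) \<le> 1" using ultra[of c "p * r"] by simp }
  thus ?case by (auto simp: inO)
qed (simp add: inO)

lemma R_fin: "finite (R m)"
  by (induction m) (simp_all add: Cfin)

lemma R_sep: "r \<in> R m \<Longrightarrow> r' \<in> R m \<Longrightarrow> nabs (r - r') \<le> rad m \<Longrightarrow> r = r'"
proof (induction m arbitrary: r r')
  case (Suc m)
  obtain c s where r: "r = c + p * s" "c \<in> C" "s \<in> R m" using Suc.prems(1) by auto
  obtain c' s' where r': "r' = c' + p * s'" "c' \<in> C" "s' \<in> R m" using Suc.prems(2) by auto
  have "s \<in> Ov" "s' \<in> Ov" using R_O r r' by blast+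
  hence "nabs s \<le> 1" "nabs s' \<le> 1" by (auto simp: inO)
  hence sO: "nabs (s - s') \<le> 1" using ultra_diff[of s s'] by simp
  have ps: "nabs (p * (s - s')) \<le> 1 / Q" using pmul_le sO by blast
  have "rad m / Q \<le> 1 / Q" using rad_le1[of m] Qpos by (simp add: divide_right_mono)
  hence "nabs (r - r') \<le> 1 / Q" using Suc.prems(3) rad_Suc[of m] by simp
  moreover have "c - c' = (r - r') - p * (s - s')" using r r' by (simp add: algebra_simps)
  ultimately have "nabs (c - c') \<le> 1 / Q" using ultra_diff[of "r - r'" "p * (s - s')"] ps by simp
  hence "c = c'" using C_sep r r' invQ_lt1 by force
  hence "r - r' = p * (s - s')" using r r' by (simp add: algebra_simps)
  hence "nabs (s - s') / Q \<le> rad m / Q" using Suc.prems(3) by (simp add: mult nabs_p rad_Suc)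
  hence "nabs (s - s') \<le> rad m" using Qpos by (simp add: divide_le_cancel)
  hence "s = s'" using Suc.IH r r' by blast
  thus ?case using r r' \<open>c = c'\<close> by simp
qed simp

lemma cpr_inj: assumes "c \<in> C" "c' \<in> C" "r \<in> Ov" "r' \<in> Ov" "c + p * r = c' + p * r'"
  shows "c = c' \<and> r = r'"
proof -
  have "c - c' = p * (r' - r)" using assms(5) by (simp add: algebra_simps)
  moreover have "nabs (r' - r) \<le> 1" using assms ultra_diff[of r' r] by (auto simp: inO)
  ultimately have "nabs (c - c') \<le> 1 / Q" using pmul_le by simp
  hence "c = c'" using C_sep assms invQ_lt1 by force
  thus ?thesis using assms(5) p_nz by simp
qed

lemma R_card: "card (R m) = q ^ m"
proof (induction m)
  case (Suc m)
  have "inj_on (\<lambda>(c,r). c + p * r) (C \<times> R m)"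
  proof (rule inj_onI, clarify)
    fix c r c' r' assume a: "c \<in> C" "r \<in> R m" "c' \<in> C" "r' \<in> R m" "c + p * r = c' + p * r'"
    thus "c = c' \<and> r = r'" using cpr_inj R_O by blast
  qed
  thus ?case using Suc Cfin R_fin[of m] by (simp add: card_image card_cartesian_product Ccard)
qed simp

lemma R_cover: "x \<in> Ov \<Longrightarrow> \<exists>r\<in>R m. nabs (x - r) \<le> rad m"
proof (induction m arbitrary: x)
  case 0 thus ?case by (simp add: inO)
next
  case (Suc m)
  then obtain c where c: "c \<in> C" "nabs (x - c) < 1" using Cuniq by blast
  define y where "y = (x - c) / p"
  have "nabs y = nabs (x - c) * Q" using p_nz by (simp add: y_def nabs_div nabs_p)
  also have "\<dots> \<le> 1 / Q * Q" using discrete[OF c(2)] Qpos by (intro mult_right_mono) auto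
  finally have "y \<in> Ov" using Qpos by (simp add: inO)
  then obtain r where r: "r \<in> R m" "nabs (y - r) \<le> rad m" using Suc.IH by blast
  have "x - (c + p * r) = p * (y - r)" using p_nz by (simp add: y_def field_simps)
  hence "nabs (x - (c + p * r)) = nabs (y - r) / Q" by (simp add: mult nabs_p)
  also have "\<dots> \<le> rad (Suc m)" using r Qpos by (simp add: rad_Suc divide_right_mono)
  finally show ?case using r c by auto
qed

end

context nalf begin

lemma cs_mem: "x \<in> cs y m \<longleftrightarrow> nabs (x - y) \<le> rad m" by (simp add: cs_def)

lemma cs_decomp: "cs u n = (\<Union>r\<in>R k. cs (u + p ^ n * r) (n + k))"
proof
  show "cs u n \<subseteq> (\<Union>r\<in>R k. cs (u + p ^ n * r) (n + k))"
  proof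
    fix x assume x: "x \<in> cs u n"
    define y where "y = (x - u) / p ^ n"
    have pn: "p ^ n \<noteq> 0" using p_nz by simp
    have "nabs y = nabs (x - u) / rad n" by (simp add: y_def nabs_div nabs_ppow_rad)
    also have "\<dots> \<le> 1" using x rad_pos[of n] by (simp add: cs_mem)
    finally obtain r where r: "r \<in> R k" "nabs (y - r) \<le> rad k" using R_cover[of y k] by (auto simp: inO)
    have "x - (u + p ^ n * r) = p ^ n * (y - r)" using pn by (simp add: y_def field_simps)
    hence "nabs (x - (u + p ^ n * r)) = rad n * nabs (y - r)" by (simp add: mult nabs_ppow_rad)
    also have "\<dots> \<le> rad n * rad k" using r rad_pos[of n] by (intro mult_left_mono) auto
    finally show "x \<in> (\<Union>r\<in>R k. cs (u + p ^ n * r) (n + k))" using r by (auto simp: cs_mem rad_add)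
  qed
next
  show "(\<Union>r\<in>R k. cs (u + p ^ n * r) (n + k)) \<subseteq> cs u n"
  proof clarify
    fix r x assume r: "r \<in> R k" and x: "x \<in> cs (u + p ^ n * r) (n + k)"
    have "r \<in> Ov" using R_O r by blast
    hence "nabs r \<le> 1" by (simp add: inO)
    hence a: "nabs (p ^ n * r) \<le> rad n" using rad_pos[of n] by (simp add: mult nabs_ppow_rad mult_left_le)
    have b: "nabs (x - (u + p ^ n * r)) \<le> rad n" using x rad_mono[of n "n + k"] by (simp add: cs_mem)
    have "x - u = (x - (u + p ^ n * r)) + p ^ n * r" by simp
    hence "nabs (x - u) \<le> rad n" using ultra[of "x - (u + p ^ n * r)" "p ^ n * r"] a b by simp
    thus "x \<in> cs u n" by (simp add: cs_mem)
  qed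
qed

lemma cs_disj: "disjoint_family_on (\<lambda>r. cs (u + p ^ n * r) (n + k)) (R k)"
  unfolding disjoint_family_on_def
proof (intro ballI impI)
  fix r r' assume rr: "r \<in> R k" "r' \<in> R k" "r \<noteq> r'"
  show "cs (u + p ^ n * r) (n + k) \<inter> cs (u + p ^ n * r') (n + k) = {}"
  proof (rule ccontr)
    assume "\<not> ?thesis"
    then obtain x where "nabs (x - (u + p ^ n * r)) \<le> rad (n + k)" "nabs (x - (u + p ^ n * r')) \<le> rad (n + k)"
      by (auto simp: cs_mem)
    hence "nabs ((u + p ^ n * r) - (u + p ^ n * r')) \<le> rad (n + k)"
      using ultra_trans[of "u + p ^ n * r" x "rad (n+k)" "u + p ^ n * r'"] nabs_sym by metis
    moreover have "(u + p ^ n * r) - (u + p ^ n * r') = p ^ n * (r - r')" by (simp add: algebra_simps)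
    ultimately have "rad n * nabs (r - r') \<le> rad n * rad k" by (simp add: mult nabs_ppow_rad rad_add)
    hence "nabs (r - r') \<le> rad k" using rad_pos[of n] by simp
    thus False using R_sep rr by blast
  qed
qed

lemma cs_same: assumes "nabs (y - u) \<le> rad n" shows "cs y n = cs u n"
proof -
  have "nabs (u - y) \<le> rad n" using assms nabs_sym by metis
  thus ?thesis using assms unfolding cs_def by (auto intro: ultra_trans)
qed

end

locale haar = nalf +
  fixes M :: "'a measure"
  assumes H: "haar_normalized nabs q M"
begin

lemma spM: "space M = UNIV" using H unfolding haar_normalized_def by (elim conjE) simp
lemma setsM: "sets M = sigma_sets UNIV {disk nabs q a k | a k. True}" using H unfolding haar_normalized_def by (elim conjE) simp
lemma transl: "A \<in> sets M \<Longrightarrow> emeasure M ((\<lambda>x. a + x) ` A) = emeasure M A" using H unfolding haar_normalized_def by (elim conjE) simp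
lemma eO: "emeasure M Ov = 1" using H unfolding haar_normalized_def by (elim conjE) simp

lemma cs_sets: "cs y m \<in> sets M"
proof -
  have "disk nabs q y (- int m) \<in> {disk nabs q a k | a k. True}" by blast
  hence "disk nabs q y (- int m) \<in> sets M" unfolding setsM by (rule sigma_sets.Basic)
  thus ?thesis by (simp add: disk_cs)
qed

lemma O_sets: "Ov \<in> sets M" using cs_sets[of 0 0] O_cs by simp

lemma cs_transl: "cs y m = (\<lambda>x. (y - y') + x) ` cs y' m"
proof -
  have "x \<in> cs y m \<Longrightarrow> x \<in> (\<lambda>x. (y - y') + x) ` cs y' m" for x
    by (rule image_eqI[of _ _ "x - (y - y')"]) (auto simp: cs_mem algebra_simps)
  thus ?thesis by (auto simp: cs_mem algebra_simps)
qed

lemma em_cs_eq: "emeasure M (cs y m) = emeasure M (cs 0 m)"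
  using transl[OF cs_sets[of 0 m], of y] cs_transl[of y m 0] by simp

lemma em_cs: "emeasure M (cs y m) = ennreal (rad m)"
proof -
  have d: "disjoint_family_on (\<lambda>r. cs r m) (R m)" using cs_disj[of 0 0 m] by simp
  have U: "Ov = (\<Union>r\<in>R m. cs r m)" using cs_decomp[of 0 0 m] O_cs by simp
  have "1 = emeasure M (\<Union>r\<in>R m. cs r m)" using eO[unfolded U] by simp
  also have "\<dots> = (\<Sum>r\<in>R m. emeasure M (cs r m))"
  proof -
    have i: "(\<lambda>r. cs r m) ` R m \<subseteq> sets M" by (rule image_subsetI) (rule cs_sets)
    from sum_emeasure[of "\<lambda>r. cs r m" "R m" M, OF i d R_fin[of m]] show ?thesis by (rule sym)
  qed
  also have "\<dots> = (\<Sum>r\<in>R m. emeasure M (cs 0 m))"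
    by (rule sum.cong[OF refl]) (rule em_cs_eq)
  also have "\<dots> = of_nat (q ^ m) * emeasure M (cs 0 m)"
    using R_card[of m] by simp
  finally have e: "of_nat (q ^ m) * emeasure M (cs 0 m) = 1" by simp
  have "emeasure M (cs 0 m) \<noteq> \<infinity>"
  proof
    assume "emeasure M (cs 0 m) = \<infinity>"
    moreover have "q ^ m > 0" using q_ge2 by simp
    ultimately show False using e by (simp add: ennreal_mult_eq_top_iff)
  qed
  define t where "t = enn2real (emeasure M (cs 0 m))"
  have t: "emeasure M (cs 0 m) = ennreal t" "t \<ge> 0"
    using \<open>emeasure M (cs 0 m) \<noteq> \<infinity>\<close> by (simp_all add: t_def ennreal_enn2real_if)
  have "ennreal (real (q ^ m) * t) = ennreal 1" using e t by (simp add: ennreal_mult' ennreal_of_nat_eq_real_of_nat)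
  hence "real (q ^ m) * t = 1" using t q_ge2 by (subst (asm) ennreal_inj) auto
  hence "t = rad m" using Qpos by (simp add: rad_def field_simps)
  thus ?thesis using t em_cs_eq[of y m] by simp
qed

lemma meas_cs: "measure M (cs y m) = rad m"
  using em_cs rad_pos by (simp add: measure_def less_imp_le)

lemma union_meas:
  assumes S: "S \<subseteq> R k" and A: "\<And>r. r \<in> S \<Longrightarrow> A r \<in> sets M"
    and Asub: "\<And>r. r \<in> S \<Longrightarrow> A r \<subseteq> cs (u + p ^ n * r) (n + k)"
  shows "(\<Union>r\<in>S. A r) \<in> sets M \<and> measure M (\<Union>r\<in>S. A r) = (\<Sum>r\<in>S. measure M (A r))"
proof
  have fin: "finite S" using S R_fin finite_subset by blast
  thus "(\<Union>r\<in>S. A r) \<in> sets M" using A by blast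
  have "disjoint_family_on A S"
    using disjoint_family_on_mono[OF S cs_disj[of u n k]] Asub unfolding disjoint_family_on_def by blast
  moreover have "emeasure M (A r) \<noteq> \<infinity>" if "r \<in> S" for r
  proof -
    have le: "emeasure M (A r) \<le> emeasure M (cs (u + p ^ n * r) (n + k))"
      using Asub[OF that] cs_sets by (rule emeasure_mono)
    have "emeasure M (cs (u + p ^ n * r) (n + k)) \<noteq> top" by (simp add: em_cs)
    thus ?thesis using neq_top_trans[OF _ le] by simp
  qed
  ultimately show "measure M (\<Union>r\<in>S. A r) = (\<Sum>r\<in>S. measure M (A r))"
    using fin A by (intro measure_finite_Union) auto
qed

end

context nalf begin

definition cd :: "'a \<Rightarrow> 'a" where "cd y = (THE c. c \<in> C \<and> nabs (y - c) < 1)"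

lemma cd: assumes "y \<in> Ov" shows "cd y \<in> C" "nabs (y - cd y) < 1"
proof -
  have "\<exists>!c. c \<in> C \<and> nabs (y - c) < 1" using Cuniq[OF assms] by blast
  from theI'[OF this] show "cd y \<in> C" "nabs (y - cd y) < 1" unfolding cd_def by blast+
qed

primrec rem :: "'a \<Rightarrow> nat \<Rightarrow> 'a" where
  "rem x 0 = x" | "rem x (Suc m) = (rem x m - cd (rem x m)) / p"

definition digit :: "'a \<Rightarrow> nat \<Rightarrow> 'a" where "digit x m = cd (rem x m)"

lemma rem_O: "x \<in> Ov \<Longrightarrow> rem x m \<in> Ov"
proof (induction m)
  case (Suc m)
  have "nabs (rem x m - cd (rem x m)) \<le> 1 / Q" using cd(2)[OF Suc.IH[OF Suc.prems]] by (rule discrete)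
  hence "nabs (rem x m - cd (rem x m)) * Q \<le> 1" using Qpos by (simp add: field_simps)
  thus ?case by (simp add: inO nabs_div nabs_p)
qed simp

lemma digit_C: "x \<in> Ov \<Longrightarrow> digit x m \<in> C"
  unfolding digit_def using cd(1) rem_O by blast

lemma rem_step: "rem x m = digit x m + p * rem x (Suc m)"
  using p_nz by (simp add: digit_def)

lemma rem_expand: "rem x j = (\<Sum>i<M. digit x (j + i) * p ^ i) + p ^ M * rem x (j + M)"
proof (induction M)
  case (Suc M)
  have "p ^ M * rem x (j + M) = p ^ M * digit x (j + M) + p ^ Suc M * rem x (j + Suc M)"
    using rem_step[of x "j + M"] by (simp add: algebra_simps del: rem.simps)
  thus ?case using Suc by (simp add: algebra_simps del: rem.simps)
qed simp

lemma rem_approx: assumes "x \<in> Ov" shows "nabs (rem x j - (\<Sum>i<M. digit x (j + i) * p ^ i)) \<le> rad M"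
proof -
  have "rem x j - (\<Sum>i<M. digit x (j + i) * p ^ i) = p ^ M * rem x (j + M)"
    using rem_expand[of x j M] by simp
  moreover have "nabs (rem x (j + M)) \<le> 1" using rem_O[OF assms] by (simp add: inO)
  ultimately show ?thesis using rad_pos[of M] by (simp add: mult nabs_ppow_rad mult_left_le)
qed

lemma sum_int_shift: "(\<Sum>n\<in>{a..a + int M - 1}. F n) = (\<Sum>i<M. F (a + int i))"
proof (induction M)
  case (Suc M)
  have "{a..a + int (Suc M) - 1} = insert (a + int M) {a..a + int M - 1}" by auto
  thus ?case using Suc by (simp add: ac_simps)
qed simp

lemma rad_pow: "rad n = (1 / Q) ^ n" by (simp add: rad_def power_one_over inverse_eq_divide)

lemma small_rad: assumes "e > 0" obtains n where "rad n < e"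
proof -
  obtain n where "(1 / Q) ^ n < e" using real_arch_pow_inv[OF assms, of "1/Q"] Qgt1 by auto
  thus ?thesis using that rad_pow by auto
qed

lemma ppowi_split: "p powi (int i - int k) = p powi (- int k) * p ^ i"
proof -
  have "p powi (- int k + int i) = p powi (- int k) * p powi (int i)"
    using p_nz by (intro power_int_add) simp
  thus ?thesis by simp
qed

abbreviation trunc :: "(int \<Rightarrow> 'a) \<Rightarrow> int \<Rightarrow> 'a" where
  "trunc c \<equiv> (\<lambda>n. if n \<ge> 0 then c n else 0)"

lemma exp_exists:
  assumes xz: "p ^ k * z \<in> Ov"
  defines "c \<equiv> (\<lambda>n. if - int k \<le> n then digit (p ^ k * z) (nat (n + int k)) else 0)"
  shows "expands nabs C p c (- int k) z \<and> expands nabs C p (trunc c) 0 (rem (p ^ k * z) k)"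
proof -
  define x where "x = p ^ k * z"
  have cx: "c = (\<lambda>n. if - int k \<le> n then digit x (nat (n + int k)) else 0)" unfolding c_def x_def by (rule refl)
  have xO: "x \<in> Ov" using xz by (simp add: x_def)
  have cC: "c n \<in> C" for n using digit_C[OF xO] C0 by (simp add: cx)
  have zx: "z = p powi (- int k) * x" using p_nz by (simp add: x_def power_int_minus field_simps)
  have A: "expands nabs C p c (- int k) z"
    unfolding expands_def
  proof (intro conjI allI impI)
    show "c n \<in> C" for n by (rule cC)
    show "n < - int k \<Longrightarrow> c n = 0" for n by (simp add: cx)
    fix e :: real assume e: "e > 0"
    obtain n0 where n0: "rad n0 < e" using small_rad[OF e] by blast
    show "\<exists>N0. \<forall>N\<ge>N0. nabs (z - (\<Sum>n\<in>{- int k..N}. c n * p powi n)) < e"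
    proof (intro exI allI impI)
      fix N :: int assume N: "int n0 \<le> N"
      define M where "M = nat (N + int k + 1)"
      have NM: "N = - int k + int M - 1" using N by (simp add: M_def)
      have "(\<Sum>n\<in>{- int k..N}. c n * p powi n) = (\<Sum>i<M. c (- int k + int i) * p powi (- int k + int i))"
        unfolding NM by (rule sum_int_shift)
      also have "\<dots> = (\<Sum>i<M. p powi (- int k) * (digit x i * p ^ i))"
        using p_nz by (intro sum.cong refl) (simp add: cx ppowi_split)
      also have "\<dots> = p powi (- int k) * (\<Sum>i<M. digit x i * p ^ i)"
        by (simp add: sum_distrib_left)
      finally have "z - (\<Sum>n\<in>{- int k..N}. c n * p powi n) = p powi (- int k) * (x - (\<Sum>i<M. digit x i * p ^ i))"
        unfolding zx by (simp add: algebra_simps)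
      hence "nabs (z - (\<Sum>n\<in>{- int k..N}. c n * p powi n)) = Q ^ k * nabs (rem x 0 - (\<Sum>i<M. digit x (0 + i) * p ^ i))"
        by (simp add: mult nabs_ppowi)
      also have "\<dots> \<le> Q ^ k * rad M" using rem_approx[OF xO, of 0 M] Qpos by (intro mult_left_mono) auto
      also have "\<dots> = rad (M - k)"
      proof -
        have "M = k + (M - k)" using N by (simp add: M_def)
        hence "rad M = rad k * rad (M - k)" by (metis rad_add)
        thus ?thesis using rad_Q[of k] by (simp add: mult.assoc[symmetric])
      qed
      also have "\<dots> \<le> rad n0" using N by (intro rad_mono) (simp add: M_def)
      finally show "nabs (z - (\<Sum>n\<in>{- int k..N}. c n * p powi n)) < e" using n0 by simp
    qed
  qed
  have B: "expands nabs C p (trunc c) 0 (rem x k)"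
    unfolding expands_def
  proof (intro conjI allI impI)
    show "trunc c n \<in> C" for n using cC C0 by simp
    show "n < 0 \<Longrightarrow> trunc c n = 0" for n by simp
    fix e :: real assume e: "e > 0"
    obtain n0 where n0: "rad n0 < e" using small_rad[OF e] by blast
    show "\<exists>N0. \<forall>N\<ge>N0. nabs (rem x k - (\<Sum>n\<in>{0..N}. trunc c n * p powi n)) < e"
    proof (intro exI allI impI)
      fix N :: int assume N: "int n0 \<le> N"
      define M where "M = nat (N + 1)"
      have NM: "N = 0 + int M - 1" using N by (simp add: M_def)
      have "(\<Sum>n\<in>{0..N}. trunc c n * p powi n) = (\<Sum>i<M. trunc c (0 + int i) * p powi (0 + int i))"
        unfolding NM by (rule sum_int_shift)
      also have "\<dots> = (\<Sum>i<M. digit x (k + i) * p ^ i)"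
        by (intro sum.cong refl) (simp add: cx nat_add_distrib add.commute)
      finally have "nabs (rem x k - (\<Sum>n\<in>{0..N}. trunc c n * p powi n)) \<le> rad M"
        using rem_approx[OF xO, of k M] by simp
      also have "\<dots> \<le> rad n0" using N by (intro rad_mono) (simp add: M_def)
      finally show "nabs (rem x k - (\<Sum>n\<in>{0..N}. trunc c n * p powi n)) < e" using n0 by simp
    qed
  qed
  show ?thesis using A B by (simp add: x_def)
qed

end

context nalf begin

lemma exp_ex: "p ^ k * z \<in> Ov \<Longrightarrow> \<exists>c. expands nabs C p c (- int k) z \<and> expands nabs C p (trunc c) 0 (rem (p ^ k * z) k)"
  using exp_exists by blast

lemma C_le1: assumes "c \<in> C" shows "nabs c \<le> 1"
proof -
  have "c \<in> Ov" using CO assms by blast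
  thus ?thesis by (simp add: inO)
qed

lemma sum_split0: assumes "w \<le> 0" "N \<ge> -1"
  shows "(\<Sum>n\<in>{w..N}. F n) = (\<Sum>n\<in>{w..-1}. F n) + (\<Sum>n\<in>{0..N::int}. F n)"
proof -
  have "{w..N} = {w..-1} \<union> {0..N}" using assms by auto
  moreover have "{w..-1} \<inter> {0..N} = {}" by auto
  ultimately show ?thesis by (simp add: sum.union_disjoint)
qed

lemma sum_extend: assumes "\<And>n. n < v \<Longrightarrow> F n = 0" "w \<le> v"
  shows "(\<Sum>n\<in>{w..N}. F n) = (\<Sum>n\<in>{v..N::int}. F n)"
  using assms by (intro sum.mono_neutral_right) auto

lemma expD: assumes "expands nabs C p c v z"
  shows "\<And>n. c n \<in> C" "\<And>n. n < v \<Longrightarrow> c n = 0"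
    "\<And>e. e > 0 \<Longrightarrow> \<exists>N0. \<forall>N\<ge>N0. nabs (z - (\<Sum>n\<in>{v..N}. c n * p powi n)) < e"
  using assms unfolding expands_def by blast+

lemma ppowi_le1: "n \<ge> 0 \<Longrightarrow> nabs (p powi n) \<le> 1"
proof -
  assume "n \<ge> 0"
  hence "Q powi (- n) \<le> Q powi 0" using Qgt1 by (intro power_int_increasing) auto
  thus ?thesis by (simp add: nabs_ppowi)
qed

lemma exp_O: assumes "expands nabs C p d 0 y" shows "y \<in> Ov"
proof -
  obtain N0 where N0: "\<forall>N\<ge>N0. nabs (y - (\<Sum>n\<in>{0..N}. d n * p powi n)) < 1"
    using expD(3)[OF assms, of 1] by auto
  define N where "N = max N0 0"
  define s where "s = (\<Sum>n\<in>{0..N}. d n * p powi n)"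
  have a: "nabs (y - s) \<le> 1" using N0 by (auto simp: N_def s_def intro: less_imp_le)
  have "nabs s \<le> 1" unfolding s_def
  proof (rule sum_le)
    fix n assume n: "n \<in> {0..N}"
    have "nabs (d n) \<le> 1" using expD(1)[OF assms] by (rule C_le1)
    moreover have "nabs (p powi n) \<le> 1" using n by (intro ppowi_le1) auto
    ultimately show "nabs (d n * p powi n) \<le> 1" by (simp add: mult mult_le_one nn)
  qed auto
  moreover have "y = (y - s) + s" by simp
  ultimately have "nabs y \<le> 1" using ultra[of "y - s" s] a by (metis max.bounded_iff order_trans)
  thus ?thesis by (simp add: inO)
qed

lemma exp_polar: assumes A: "expands nabs C p c v z" and B: "expands nabs C p (trunc c) 0 y"
  shows "z = (\<Sum>n\<in>{min v 0..-1}. c n * p powi n) + y"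
proof -
  define P where "P = (\<Sum>n\<in>{min v 0..-1}. c n * p powi n)"
  have small: "nabs (z - (P + y)) < e" if e: "e > 0" for e
  proof -
    obtain N1 where N1: "\<forall>N\<ge>N1. nabs (z - (\<Sum>n\<in>{v..N}. c n * p powi n)) < e"
      using expD(3)[OF A e] by blast
    obtain N2 where N2: "\<forall>N\<ge>N2. nabs (y - (\<Sum>n\<in>{0..N}. trunc c n * p powi n)) < e"
      using expD(3)[OF B e] by blast
    define N where "N = max (max N1 N2) 0"
    have "(\<Sum>n\<in>{v..N}. c n * p powi n) = (\<Sum>n\<in>{min v 0..N}. c n * p powi n)"
      using expD(2)[OF A] by (intro sum_extend[symmetric]) auto
    also have "\<dots> = P + (\<Sum>n\<in>{0..N}. c n * p powi n)"
      unfolding P_def by (rule sum_split0) (auto simp: N_def)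
    also have "(\<Sum>n\<in>{0..N}. c n * p powi n) = (\<Sum>n\<in>{0..N}. trunc c n * p powi n)"
      by (intro sum.cong) auto
    finally have eq: "(\<Sum>n\<in>{v..N}. c n * p powi n) = P + (\<Sum>n\<in>{0..N}. trunc c n * p powi n)" .
    define s1 where "s1 = (\<Sum>n\<in>{v..N}. c n * p powi n)"
    define s2 where "s2 = (\<Sum>n\<in>{0..N}. trunc c n * p powi n)"
    have a: "nabs (z - s1) < e" using N1 by (simp add: N_def s1_def)
    have "nabs (y - s2) < e" using N2 by (simp add: N_def s2_def)
    hence b: "nabs (s2 - y) < e" using nabs_sym by metis
    have "z - (P + y) = (z - s1) + (s2 - y)"
      using eq unfolding s1_def[symmetric] s2_def[symmetric] by (simp add: algebra_simps)
    hence "nabs (z - (P + y)) \<le> max (nabs (z - s1)) (nabs (s2 - y))" using ultra by metis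
    thus ?thesis using a b by simp
  qed
  have "z - (P + y) = 0"
  proof (rule ccontr)
    assume "z - (P + y) \<noteq> 0"
    hence "nabs (z - (P + y)) > 0" using nn[of "z - (P + y)"] zero_iff by (metis less_eq_real_def)
    thus False using small by fastforce
  qed
  thus ?thesis by (simp add: P_def)
qed

end

context nalf begin

lemma exp_unique:
  assumes A: "expands nabs C p c v z" and B: "expands nabs C p (trunc c) 0 y"
    and A': "expands nabs C p c' v' z" and B': "expands nabs C p (trunc c') 0 y'"
  shows "y = y'"
proof (rule ccontr)
  assume ne: "y \<noteq> y'"
  define w where "w = min (min v v') 0"
  define P where "P = (\<Sum>n\<in>{w..-1}. c n * p powi n)"
  define P' where "P' = (\<Sum>n\<in>{w..-1}. c' n * p powi n)"
  have "(\<Sum>n\<in>{min v 0..-1}. c n * p powi n) = P"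
    unfolding P_def using expD(2)[OF A] by (intro sum_extend[symmetric]) (auto simp: w_def)
  hence zP: "z = P + y" using exp_polar[OF A B] by simp
  have "(\<Sum>n\<in>{min v' 0..-1}. c' n * p powi n) = P'"
    unfolding P'_def using expD(2)[OF A'] by (intro sum_extend[symmetric]) (auto simp: w_def)
  hence zP': "z = P' + y'" using exp_polar[OF A' B'] by simp
  have yO: "nabs y \<le> 1" "nabs y' \<le> 1" using exp_O[OF B] exp_O[OF B'] by (auto simp: inO)
  have PP: "P - P' = y' - y" using zP zP' by (simp add: algebra_simps)
  hence le1: "nabs (P - P') \<le> 1" using ultra_diff[of y' y] yO by simp
  define Ds where "Ds = {n\<in>{w..-1}. c n \<noteq> c' n}"
  have Dsf: "finite Ds" unfolding Ds_def by (rule finite_subset[of _ "{w..-1}"]) auto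
  define e where "e = (\<lambda>n. (c n - c' n) * p powi n)"
  have PPe: "P - P' = (\<Sum>n\<in>{w..-1}. e n)"
    by (simp add: P_def P'_def e_def sum_subtractf[symmetric] left_diff_distrib)
  have "Ds \<noteq> {}"
  proof
    assume "Ds = {}"
    hence "\<forall>n\<in>{w..-1}. e n = 0" by (auto simp: Ds_def e_def)
    hence "P - P' = 0" using PPe by simp
    thus False using PP ne by simp
  qed
  define j where "j = Min Ds"
  have jD: "j \<in> Ds" using Dsf \<open>Ds \<noteq> {}\<close> by (simp add: j_def)
  have jmin: "\<And>n. n \<in> Ds \<Longrightarrow> j \<le> n" using Dsf by (simp add: j_def)
  have jr: "w \<le> j" "j \<le> -1" "c j \<noteq> c' j" using jD by (auto simp: Ds_def)
  have "(\<Sum>n\<in>{w..-1}. e n) = (\<Sum>n\<in>{j..-1}. e n)"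
  proof (rule sum.mono_neutral_right)
    show "\<forall>i\<in>{w..-1} - {j..-1}. e i = 0"
    proof
      fix i assume i: "i \<in> {w..-1} - {j..-1}"
      hence "i \<notin> Ds" using jmin by force
      thus "e i = 0" using i by (auto simp: Ds_def e_def)
    qed
  qed (use jr in auto)
  also have "{j..-1} = insert j {j+1..-1}" using jr by auto
  finally have split: "P - P' = e j + (\<Sum>n\<in>{j+1..-1}. e n)" using PPe by simp
  have cC: "c n \<in> C" "c' n \<in> C" for n using expD(1)[OF A] expD(1)[OF A'] by auto
  have ej: "nabs (e j) = Q powi (- j)"
    using C_diff[OF cC(1)[of j] cC(2)[of j] jr(3)] by (simp add: e_def mult nabs_ppowi)
  have rest: "nabs (\<Sum>n\<in>{j+1..-1}. e n) \<le> Q powi (- (j + 1))"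
  proof (rule sum_le)
    fix n assume n: "n \<in> {j+1..-1}"
    have d1: "nabs (c n - c' n) \<le> 1" using ultra_diff[of "c n" "c' n"] C_le1[OF cC(1)[of n]] C_le1[OF cC(2)[of n]] by simp
    have m: "Q powi (- n) \<le> Q powi (- (j + 1))" using n Qgt1 by (intro power_int_increasing) auto
    have z: "Q powi (- n) \<ge> 0" using Qpos by simp
    have "nabs (e n) = nabs (c n - c' n) * Q powi (- n)" by (simp add: e_def mult nabs_ppowi)
    also have "\<dots> \<le> 1 * Q powi (- n)" using d1 z by (rule mult_right_mono)
    also have "\<dots> \<le> Q powi (- (j + 1))" using m by simp
    finally show "nabs (e n) \<le> Q powi (- (j + 1))" .
  qed (use Qpos in auto)
  have "Q powi (- (j + 1)) < Q powi (- j)" using Qgt1 by (intro power_int_strict_increasing) auto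
  hence "nabs (P - P') = Q powi (- j)" using split ej rest ultra_strict by simp
  moreover have "Q powi 1 \<le> Q powi (- j)" using jr Qgt1 by (intro power_int_increasing) auto
  ultimately show False using le1 Qgt1 by simp
qed

lemma bracket_eq: assumes A: "expands nabs C p c v z" and B: "expands nabs C p (trunc c) 0 y"
  shows "bracket nabs C p z = y"
  unfolding bracket_def
proof (rule the_equality)
  show "\<exists>c v. expands nabs C p c v z \<and> expands nabs C p (trunc c) 0 y" using A B by blast
  fix y' assume "\<exists>c v. expands nabs C p c v z \<and> expands nabs C p (trunc c) 0 y'"
  then obtain c' v' where "expands nabs C p c' v' z" "expands nabs C p (trunc c') 0 y'" by blast
  thus "y' = y" using exp_unique[OF A B] by metis
qed

lemma exists_k: "\<exists>k. p ^ k * z \<in> Ov"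
proof (cases "z = 0")
  case True thus ?thesis by (auto simp: inO)
next
  case False
  hence nz: "nabs z > 0" using nn[of z] zero_iff by (metis less_eq_real_def)
  obtain k where "rad k < 1 / nabs z" using small_rad[of "1 / nabs z"] nz by auto
  hence "rad k * nabs z < 1" using nz by (simp add: field_simps)
  thus ?thesis by (intro exI[of _ k]) (simp add: inO mult nabs_ppow_rad)
qed

lemma z_expand: "\<exists>c v y. expands nabs C p c v z \<and> expands nabs C p (trunc c) 0 y"
  using exists_k[of z] exp_ex by blast

lemma bracket_O: "bracket nabs C p z \<in> Ov"
proof -
  obtain c v y where "expands nabs C p c v z" "expands nabs C p (trunc c) 0 y" using z_expand by blast
  thus ?thesis using bracket_eq exp_O by metis
qed

lemma bracket_add: assumes eO: "e \<in> Ov" shows "bracket nabs C p (z + e) = bracket nabs C p z + e"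
proof -
  obtain k where k: "p ^ k * z \<in> Ov" using exists_k by blast
  then obtain c where A: "expands nabs C p c (- int k) z"
     and B: "expands nabs C p (trunc c) 0 (rem (p ^ k * z) k)" using exp_ex by blast
  define y where "y = rem (p ^ k * z) k"
  have By: "bracket nabs C p z = y" using bracket_eq[OF A B] by (simp add: y_def)
  define P where "P = (\<Sum>n\<in>{- int k..-1}. c n * p powi n)"
  have zP: "z = P + y" using exp_polar[OF A B] by (simp add: P_def y_def)
  have "y \<in> Ov" using exp_O[OF B] by (simp add: y_def)
  hence "y + e \<in> Ov" using eO ultra[of y e] by (auto simp: inO)
  then obtain c' where "expands nabs C p (trunc c') 0 (rem (p ^ 0 * (y + e)) 0)" using exp_ex[of 0 "y + e"] by auto
  hence B': "expands nabs C p (trunc c') 0 (y + e)" by simp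
  define d where "d = trunc c'"
  have dB: "expands nabs C p d 0 (y + e)" using B' by (simp add: d_def)
  define c2 where "c2 = (\<lambda>n. if n < 0 then c n else d n)"
  have td: "trunc c2 = d" by (rule ext) (simp add: c2_def d_def)
  have A2: "expands nabs C p c2 (- int k) (z + e)"
    unfolding expands_def
  proof (intro conjI allI impI)
    show "c2 n \<in> C" for n using expD(1)[OF A] expD(1)[OF dB] by (simp add: c2_def)
    show "n < - int k \<Longrightarrow> c2 n = 0" for n using expD(2)[OF A] by (simp add: c2_def)
    fix e' :: real assume e': "e' > 0"
    obtain N0 where N0: "\<forall>N\<ge>N0. nabs (y + e - (\<Sum>n\<in>{0..N}. d n * p powi n)) < e'"
      using expD(3)[OF dB e'] by blast
    show "\<exists>N0. \<forall>N\<ge>N0. nabs (z + e - (\<Sum>n\<in>{- int k..N}. c2 n * p powi n)) < e'"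
    proof (intro exI allI impI)
      fix N assume N: "max N0 0 \<le> N"
      have "(\<Sum>n\<in>{- int k..N}. c2 n * p powi n) = (\<Sum>n\<in>{- int k..-1}. c2 n * p powi n) + (\<Sum>n\<in>{0..N}. c2 n * p powi n)"
        using N by (intro sum_split0) auto
      also have "(\<Sum>n\<in>{- int k..-1}. c2 n * p powi n) = P" unfolding P_def by (intro sum.cong) (auto simp: c2_def)
      also have "(\<Sum>n\<in>{0..N}. c2 n * p powi n) = (\<Sum>n\<in>{0..N}. d n * p powi n)" by (intro sum.cong) (auto simp: c2_def)
      finally have eqq: "z + e - (\<Sum>n\<in>{- int k..N}. c2 n * p powi n) = y + e - (\<Sum>n\<in>{0..N}. d n * p powi n)"
        using zP by (simp add: algebra_simps)
      have "nabs (y + e - (\<Sum>n\<in>{0..N}. d n * p powi n)) < e'" using N0 N by simp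
      thus "nabs (z + e - (\<Sum>n\<in>{- int k..N}. c2 n * p powi n)) < e'" unfolding eqq .
    qed
  qed
  have "bracket nabs C p (z + e) = y + e" using bracket_eq[OF A2] dB td by simp
  thus ?thesis using By by simp
qed

end

context haar begin

lemma cs_O: "v \<in> Ov \<Longrightarrow> cs v l \<subseteq> Ov"
proof
  fix x assume "v \<in> Ov" "x \<in> cs v l"
  hence "nabs v \<le> 1" "nabs (x - v) \<le> 1" using rad_le1[of l] by (auto simp: inO cs_mem)
  moreover have "x = (x - v) + v" by simp
  ultimately have "nabs x \<le> 1" using ultra[of "x - v" v] by (metis max.bounded_iff order_trans)
  thus "x \<in> Ov" by (simp add: inO)
qed

lemma R_le1: assumes "r \<in> R m" shows "nabs r \<le> 1"
proof -
  have "r \<in> Ov" using R_O assms by blast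
  thus ?thesis by (simp add: inO)
qed

lemma ultra_le: "nabs x \<le> r \<Longrightarrow> nabs y \<le> r \<Longrightarrow> nabs (x + y) \<le> r"
  using ultra[of x y] by simp

lemma scal: "scaling nabs q Ov h (int l) \<Longrightarrow> x \<in> Ov \<Longrightarrow> y \<in> Ov \<Longrightarrow> nabs (h x - h y) = Q ^ l * nabs (x - y)"
  unfolding scaling_def by simp

lemma O_diff: "x \<in> Ov \<Longrightarrow> y \<in> Ov \<Longrightarrow> nabs (x - y) \<le> 1"
  using ultra_diff[of x y] by (auto simp: inO)

lemma near: "nabs (x - v) \<le> rad l \<Longrightarrow> Q ^ l * nabs (x - v) \<le> rad 0"
  using rad_Q[of l] Qpos by (metis mult_left_mono rad_0 zero_le_power less_imp_le of_nat_0_le_iff)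

lemma sub:
  assumes sc: "scaling nabs q Ov h (int l)" and vO: "v \<in> Ov" and dv: "nabs (d - h v) \<le> 1"
  shows "{x \<in> cs v l. h x \<in> cs d g} \<in> sets M \<and> measure M {x \<in> cs v l. h x \<in> cs d g} = rad (l + g)"
proof -
  define w where "w = (\<lambda>s. v + p ^ l * s)"
  have wO: "w s \<in> Ov" if "s \<in> R g" for s
  proof -
    have "nabs (p ^ l * s) \<le> rad l" using R_le1[OF that] rad_pos[of l]
      by (auto simp: mult nabs_ppow_rad intro!: mult_left_le)
    hence "w s \<in> cs v l" by (simp add: w_def cs_mem)
    thus ?thesis using cs_O[OF vO] by blast
  qed
  have hw: "h (w s) - h v \<in> Ov" if "s \<in> R g" for s
  proof -
    have "nabs (h (w s) - h v) = Q ^ l * nabs (p ^ l * s)" using scal[OF sc wO[OF that] vO] by (simp add: w_def)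
    also have "\<dots> = nabs s" using rad_Q[of l] by (simp add: mult nabs_ppow_rad)
    finally show ?thesis using R_le1[OF that] by (simp add: inO)
  qed
  define phi where "phi = (\<lambda>s. SOME r. r \<in> R g \<and> nabs ((h (w s) - h v) - r) \<le> rad g)"
  have phi: "phi s \<in> R g \<and> nabs ((h (w s) - h v) - phi s) \<le> rad g" if "s \<in> R g" for s
  proof -
    have "\<exists>r. r \<in> R g \<and> nabs ((h (w s) - h v) - r) \<le> rad g" using R_cover[OF hw[OF that], of g] by blast
    from someI_ex[OF this] show ?thesis unfolding phi_def .
  qed
  have inj: "inj_on phi (R g)"
  proof (rule inj_onI)
    fix s s' assume s: "s \<in> R g" "s' \<in> R g" "phi s = phi s'"
    have "nabs ((h (w s) - h v) - (h (w s') - h v)) \<le> rad g"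
      using phi[OF s(1)] phi[OF s(2)] s(3) nabs_sym ultra_trans by metis
    hence "nabs (h (w s) - h (w s')) \<le> rad g" by simp
    moreover have "nabs (h (w s) - h (w s')) = Q ^ l * nabs (p ^ l * (s - s'))"
      using scal[OF sc wO[OF s(1)] wO[OF s(2)]] by (simp add: w_def algebra_simps)
    moreover have "Q ^ l * nabs (p ^ l * (s - s')) = nabs (s - s')"
      using rad_Q[of l] by (simp add: mult nabs_ppow_rad mult.assoc[symmetric])
    ultimately have "nabs (s - s') \<le> rad g" by simp
    thus "s = s'" using R_sep s by blast
  qed
  have surj: "phi ` R g = R g" using endo_inj_surj[OF R_fin _ inj] phi by blast
  have dvO: "d - h v \<in> Ov" using dv by (simp add: inO)
  obtain t where t: "t \<in> R g" "nabs ((d - h v) - t) \<le> rad g" using R_cover[OF dvO] by blast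
  obtain s0 where s0: "s0 \<in> R g" "phi s0 = t" using surj t(1) by (metis imageE)
  have eq: "{x \<in> cs v l. h x \<in> cs d g} = cs (w s0) (l + g)"
  proof
    show "cs (w s0) (l + g) \<subseteq> {x \<in> cs v l. h x \<in> cs d g}"
    proof
      fix x assume x: "x \<in> cs (w s0) (l + g)"
      have "x \<in> cs v l" using cs_decomp[of v l g] s0(1) x by (auto simp: w_def)
      hence xO: "x \<in> Ov" using cs_O[OF vO] by blast
      have "nabs (h x - h (w s0)) = Q ^ l * nabs (x - w s0)" using scal[OF sc xO wO[OF s0(1)]] .
      also have "\<dots> \<le> Q ^ l * rad (l + g)" using x Qpos by (intro mult_left_mono) (auto simp: cs_mem)
      also have "\<dots> = rad g" using rad_Q[of l] by (simp add: rad_add mult.assoc[symmetric])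
      finally have a1: "nabs (h x - h (w s0)) \<le> rad g" .
      have a2: "nabs ((h (w s0) - h v) - t) \<le> rad g" using phi[OF s0(1)] s0(2) by simp
      have a3: "nabs (t - (d - h v)) \<le> rad g" using t(2) nabs_sym by metis
      have "nabs ((h x - h (w s0)) + ((h (w s0) - h v) - t)) \<le> rad g"
        using ultra[of "h x - h (w s0)" "(h (w s0) - h v) - t"] a1 a2 by simp
      hence "nabs ((h x - h (w s0)) + ((h (w s0) - h v) - t) + (t - (d - h v))) \<le> rad g"
        using ultra[of "(h x - h (w s0)) + ((h (w s0) - h v) - t)" "t - (d - h v)"] a3 by simp
      hence "nabs (h x - d) \<le> rad g" by (simp add: algebra_simps)
      thus "x \<in> {x \<in> cs v l. h x \<in> cs d g}" using \<open>x \<in> cs v l\<close> by (simp add: cs_mem)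
    qed
  next
    show "{x \<in> cs v l. h x \<in> cs d g} \<subseteq> cs (w s0) (l + g)"
    proof clarify
      fix x assume x: "x \<in> cs v l" "h x \<in> cs d g"
      then obtain s where s: "s \<in> R g" "x \<in> cs (w s) (l + g)" using cs_decomp[of v l g] by (auto simp: w_def)
      have xO: "x \<in> Ov" using cs_O[OF vO] x(1) by blast
      have "nabs (h x - h (w s)) = Q ^ l * nabs (x - w s)" using scal[OF sc xO wO[OF s(1)]] .
      also have "\<dots> \<le> Q ^ l * rad (l + g)" using s Qpos by (intro mult_left_mono) (auto simp: cs_mem)
      also have "\<dots> = rad g" using rad_Q[of l] by (simp add: rad_add mult.assoc[symmetric])
      finally have b1: "nabs (h x - h (w s)) \<le> rad g" .
      have b2: "nabs (h x - d) \<le> rad g" using x(2) by (simp add: cs_mem)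
      have b3: "nabs ((h (w s) - h v) - phi s) \<le> rad g" using phi[OF s(1)] by simp
      have "nabs (phi s - t) \<le> rad g"
      proof -
        have "phi s - t = - ((h (w s) - h v) - phi s) + (h (w s) - h x) + (h x - d) + ((d - h v) - t)"
          by (simp add: algebra_simps)
        moreover have "nabs (h (w s) - h x) \<le> rad g" using b1 nabs_sym by metis
        moreover have "nabs (- ((h (w s) - h v) - phi s)) \<le> rad g" using b3 by (simp only: nabs_neg)
        ultimately show ?thesis using b2 t(2) ultra_le by metis
      qed
      hence "phi s = t" using R_sep phi[OF s(1)] t(1) by blast
      hence "s = s0" using inj s0 s(1) by (metis inj_on_def)
      thus "x \<in> cs (w s0) (l + g)" using s by simp
    qed
  qed
  show ?thesis unfolding eq using cs_sets meas_cs by simp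
qed

end

context haar begin

abbreviation br :: "'a \<Rightarrow> 'a" where "br \<equiv> bracket nabs C p"

lemma br_shift:
  assumes sc: "scaling nabs q Ov h (int l)" and xO: "x \<in> Ov" and vO: "v \<in> Ov"
    and xv: "nabs (x - v) \<le> rad l"
  shows "br (h x) = br (h v) + (h x - h v)" "nabs (h x - h v) \<le> 1"
proof -
  have "nabs (h x - h v) = Q ^ l * nabs (x - v)" using scal[OF sc xO vO] .
  also have "\<dots> \<le> Q ^ l * rad l" using xv Qpos by (intro mult_left_mono) auto
  also have "\<dots> = 1" by (rule rad_Q)
  finally show le: "nabs (h x - h v) \<le> 1" .
  have "br (h v + (h x - h v)) = br (h v) + (h x - h v)" using le by (intro bracket_add) (simp add: inO)
  thus "br (h x) = br (h v) + (h x - h v)" by simp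
qed

lemma K:
  assumes sc: "scaling nabs q Ov h (int l)" and uO: "u \<in> Ov" and nl: "n \<le> l" and aO: "a \<in> Ov"
  shows "{x \<in> cs u n. br (h x) \<in> cs a g} \<in> sets M \<and> measure M {x \<in> cs u n. br (h x) \<in> cs a g} = rad (n + g)"
proof -
  define k where "k = l - n"
  have lk: "n + k = l" using nl by (simp add: k_def)
  define v where "v = (\<lambda>r. u + p ^ n * r)"
  define A where "A = (\<lambda>r. {x \<in> cs (v r) l. br (h x) \<in> cs a g})"
  have vO: "v r \<in> Ov" if "r \<in> R k" for r
  proof -
    have "nabs (v r - u) \<le> rad n" using R_le1[OF that] rad_pos[of n]
      by (simp add: v_def mult nabs_ppow_rad mult_left_le)
    hence "v r \<in> cs u n" by (simp add: cs_mem)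
    thus ?thesis using cs_O[OF uO] by blast
  qed
  have Aeq: "A r = {x \<in> cs (v r) l. h x \<in> cs (a + h (v r) - br (h (v r))) g}" if r: "r \<in> R k" for r
  proof -
    { fix x assume x: "x \<in> cs (v r) l"
      have xO: "x \<in> Ov" using cs_O[OF vO[OF r]] x by blast
      have "br (h x) = br (h (v r)) + (h x - h (v r))"
        using br_shift(1)[OF sc xO vO[OF r]] x by (simp add: cs_mem)
      hence "br (h x) - a = h x - (a + h (v r) - br (h (v r)))" by (simp add: algebra_simps)
      hence "nabs (br (h x) - a) = nabs (h x - (a + h (v r) - br (h (v r))))" by (rule arg_cong)
      hence "br (h x) \<in> cs a g \<longleftrightarrow> h x \<in> cs (a + h (v r) - br (h (v r))) g" unfolding cs_mem by simp }
    thus ?thesis unfolding A_def by blast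
  qed
  have Am: "A r \<in> sets M \<and> measure M (A r) = rad (l + g)" if r: "r \<in> R k" for r
  proof -
    have "nabs ((a + h (v r) - br (h (v r))) - h (v r)) \<le> 1"
      using O_diff[OF aO bracket_O] by simp
    thus ?thesis unfolding Aeq[OF r] by (rule sub[OF sc vO[OF r]])
  qed
  have U: "{x \<in> cs u n. br (h x) \<in> cs a g} = (\<Union>r\<in>R k. A r)"
    using cs_decomp[of u n k] unfolding A_def v_def lk by blast
  have "(\<Union>r\<in>R k. A r) \<in> sets M \<and> measure M (\<Union>r\<in>R k. A r) = (\<Sum>r\<in>R k. measure M (A r))"
    using Am by (intro union_meas[of "R k" k _ u n]) (auto simp: A_def v_def lk)
  moreover have "(\<Sum>r\<in>R k. measure M (A r)) = real (q ^ k) * rad (l + g)"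
    using Am R_card[of k] by simp
  moreover have "real (q ^ k) * rad (l + g) = rad (n + g)"
  proof -
    have "rad (l + g) = rad k * rad (n + g)" using lk rad_add by (metis add.assoc add.commute)
    thus ?thesis using rad_Q[of k] by (simp add: mult.assoc[symmetric])
  qed
  ultimately show ?thesis unfolding U by simp
qed

end

context haar begin

lemma main:
  assumes sf: "scaling nabs q Ov f (int Lf)" and sg: "scaling nabs q Ov gg (int Lg)"
    and le: "Lg + g \<le> Lf" and aO: "a \<in> Ov"
  defines "S \<equiv> {x \<in> Ov. br (f x) \<in> cs a g \<and> br (gg x) \<in> cs a g}"
  shows "S \<in> sets M \<and> measure M S = rad g * rad g"
proof -
  define N where "N = Lg + g"
  define T where "T = {r \<in> R N. br (gg r) \<in> cs a g}"
  have TR: "T \<subseteq> R N" by (auto simp: T_def)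
  have rO: "r \<in> Ov" if "r \<in> R N" for r using R_O that by blast
  have const: "br (gg x) \<in> cs a g \<longleftrightarrow> br (gg r) \<in> cs a g" if r: "r \<in> R N" and x: "x \<in> cs r N" for r x
  proof -
    have xO: "x \<in> Ov" using cs_O[OF rO[OF r]] x by blast
    have xr: "nabs (x - r) \<le> rad N" using x by (simp add: cs_mem)
    hence "nabs (x - r) \<le> rad Lg" using rad_mono[of Lg N] by (simp add: N_def)
    hence eq: "br (gg x) = br (gg r) + (gg x - gg r)" using br_shift(1)[OF sg xO rO[OF r]] by simp
    have "nabs (gg x - gg r) = Q ^ Lg * nabs (x - r)" using scal[OF sg xO rO[OF r]] .
    also have "\<dots> \<le> Q ^ Lg * rad (Lg + g)" using xr Qpos by (intro mult_left_mono) (auto simp: N_def)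
    also have "\<dots> = rad g" using rad_Q[of Lg] by (simp add: rad_add mult.assoc[symmetric])
    finally have e: "nabs (gg x - gg r) \<le> rad g" .
    hence e': "nabs (- (gg x - gg r)) \<le> rad g" by (simp only: nabs_neg)
    have a1: "br (gg x) - a = (br (gg r) - a) + (gg x - gg r)" using eq by (simp add: algebra_simps)
    have a2: "br (gg r) - a = (br (gg x) - a) + (- (gg x - gg r))" using eq by (simp add: algebra_simps)
    show ?thesis unfolding cs_mem using a1 a2 e e' ultra_le by metis
  qed
  have Odec: "Ov = (\<Union>r\<in>R N. cs r N)" using cs_decomp[of 0 0 N] O_cs by simp
  define A where "A = (\<lambda>r. {x \<in> cs r N. br (f x) \<in> cs a g})"
  have SU: "S = (\<Union>r\<in>T. A r)"
  proof
    show "S \<subseteq> (\<Union>r\<in>T. A r)"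
    proof
      fix x assume x: "x \<in> S"
      hence "x \<in> Ov" by (simp add: S_def)
      then obtain r where r: "r \<in> R N" "x \<in> cs r N" using Odec by blast
      thus "x \<in> (\<Union>r\<in>T. A r)" using x const[OF r] by (auto simp: S_def T_def A_def)
    qed
    show "(\<Union>r\<in>T. A r) \<subseteq> S"
    proof
      fix x assume "x \<in> (\<Union>r\<in>T. A r)"
      then obtain r where r: "r \<in> T" "x \<in> A r" by blast
      hence rR: "r \<in> R N" and x: "x \<in> cs r N" by (auto simp: T_def A_def)
      have "x \<in> Ov" using cs_O[OF rO[OF rR]] x by blast
      thus "x \<in> S" using r const[OF rR x] by (auto simp: S_def T_def A_def)
    qed
  qed
  have Am: "A r \<in> sets M \<and> measure M (A r) = rad (N + g)" if "r \<in> T" for r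
    unfolding A_def using K[OF sf rO _ aO, of r N] that le by (auto simp: T_def N_def)
  have "(\<Union>r\<in>T. A r) \<in> sets M \<and> measure M (\<Union>r\<in>T. A r) = (\<Sum>r\<in>T. measure M (A r))"
    using union_meas[of T N A 0 0] TR Am by (auto simp: A_def)
  moreover have "(\<Sum>r\<in>T. measure M (A r)) = real (card T) * rad (N + g)" using Am by simp
  ultimately have S1: "S \<in> sets M" "measure M S = real (card T) * rad (N + g)" unfolding SU by auto
  define G where "G = {x \<in> cs 0 0. br (gg x) \<in> cs a g}"
  have G1: "measure M G = rad g" using K[OF sg _ _ aO, of 0 0] by (simp add: G_def inO)
  have GU: "G = (\<Union>r\<in>T. cs r N)"
  proof
    show "G \<subseteq> (\<Union>r\<in>T. cs r N)"
    proof
      fix x assume x: "x \<in> G"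
      hence "x \<in> Ov" by (simp add: G_def O_cs)
      then obtain r where r: "r \<in> R N" "x \<in> cs r N" using Odec by blast
      thus "x \<in> (\<Union>r\<in>T. cs r N)" using x const[OF r] by (auto simp: G_def T_def)
    qed
    show "(\<Union>r\<in>T. cs r N) \<subseteq> G"
    proof
      fix x assume "x \<in> (\<Union>r\<in>T. cs r N)"
      then obtain r where r: "r \<in> T" "x \<in> cs r N" by blast
      hence rR: "r \<in> R N" by (auto simp: T_def)
      have "x \<in> Ov" using cs_O[OF rO[OF rR]] r by blast
      thus "x \<in> G" using r const[OF rR r(2)] by (auto simp: G_def T_def O_cs)
    qed
  qed
  have "measure M (\<Union>r\<in>T. cs r N) = (\<Sum>r\<in>T. measure M (cs r N))"
    using union_meas[of T N "\<lambda>r. cs r N" 0 0] TR cs_sets by auto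
  also have "\<dots> = real (card T) * rad N" by (simp add: meas_cs)
  finally have "real (card T) * rad N = rad g" using G1 GU by simp
  hence "real (card T) * rad (N + g) = rad g * rad g" by (simp add: rad_add mult.assoc[symmetric])
  thus ?thesis using S1 by simp
qed

end

theorem lemma3p2:
  fixes nabs :: "'a::field \<Rightarrow> real" and q :: nat and \<pi> :: 'a and C :: "'a set"
    and M :: "'a measure" and f g :: "'a \<Rightarrow> 'a" and lf lg \<gamma> :: int
    and a :: 'a and D :: "'a set"
  assumes F: "nonarch_local_field nabs q \<pi> C"
    and H: "haar_normalized nabs q M"
    and sf: "scaling nabs q (valring nabs) f lf"
    and sg: "scaling nabs q (valring nabs) g lg"
    and lam: "lf > lg" "lg \<ge> 0"
    and Dsub: "D \<subseteq> valring nabs"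
    and Ddef: "D = disk nabs q a (- \<gamma>)"
    and gam: "0 \<le> \<gamma>" "\<gamma> \<le> lf - lg"
  shows "{x \<in> valring nabs. bracket nabs C \<pi> (f x) \<in> D \<and> bracket nabs C \<pi> (g x) \<in> D} \<in> sets M
    \<and> measure M {x \<in> valring nabs. bracket nabs C \<pi> (f x) \<in> D \<and> bracket nabs C \<pi> (g x) \<in> D}
        = (\<integral>x. indicator D (bracket nabs C \<pi> (f x)) * indicator D (bracket nabs C \<pi> (g x))
              \<partial>(restrict_space M (valring nabs)))
    \<and> (\<integral>x. indicator D (bracket nabs C \<pi> (f x)) * indicator D (bracket nabs C \<pi> (g x))
              \<partial>(restrict_space M (valring nabs))) = (measure M D)^2"
proof -
  interpret haar nabs q \<pi> C M by unfold_locales (simp_all add: F H)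
  define Lg where "Lg = nat lg"
  have Lg: "lg = int Lg" using lam(2) by (simp add: Lg_def)
  define Lf where "Lf = nat lf"
  have Lf: "lf = int Lf" using lam by (simp add: Lf_def)
  define gn where "gn = nat \<gamma>"
  have gn: "\<gamma> = int gn" using gam(1) by (simp add: gn_def)
  have Dc: "D = cs a gn" using Ddef by (simp add: gn disk_cs)
  have "a \<in> D" using rad_pos[of gn] by (simp add: Dc cs_mem)
  hence aO: "a \<in> Ov" using Dsub by blast
  have le: "Lg + gn \<le> Lf" using gam(2) by (simp add: Lf Lg gn)
  define S where "S = {x \<in> Ov. br (f x) \<in> D \<and> br (g x) \<in> D}"
  have mS: "S \<in> sets M \<and> measure M S = rad gn * rad gn"
    unfolding S_def Dc using main[OF sf[unfolded Lf] sg[unfolded Lg] le aO] .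
  have SO: "S \<subseteq> Ov" by (auto simp: S_def)
  have "(\<integral>x. indicator D (br (f x)) * indicator D (br (g x)) \<partial>(restrict_space M Ov))
      = (\<integral>x. (indicator S x :: real) \<partial>(restrict_space M Ov))"
    by (rule Bochner_Integration.integral_cong[OF refl]) (auto simp: S_def indicator_def space_restrict_space spM)
  also have "\<dots> = measure (restrict_space M Ov) (S \<inter> space (restrict_space M Ov))"
    by (rule Bochner_Integration.integral_indicator)
  also have "S \<inter> space (restrict_space M Ov) = S" using SO by (auto simp: space_restrict_space spM)
  also have "measure (restrict_space M Ov) S = measure M S"
    using SO O_sets by (intro measure_restrict_space) (auto simp: spM)
  finally have I: "(\<integral>x. indicator D (br (f x)) * indicator D (br (g x)) \<partial>(restrict_space M Ov)) = measure M S" .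
  have mD: "measure M D = rad gn" by (simp add: Dc meas_cs)
  show ?thesis using mS I mD by (simp add: S_def power2_eq_square)
qed


end
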